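(* (i) Let $n\ge 3$ with $n\ne 4,6$, and $q>\frac12$. If $u\in C^{6}(\mathbb{R}^{n})$, $u>0$, is a radially symmetric solution of $\Delta^{3}u=u^{-q}$ in $\mathbb{R}^{n}$ with $\liminf_{|x|\to+\infty}u(x)/|x|^{4}\in(0,+\infty]$, then $$\lim_{|x|\to+\infty}\frac{u(x)}{|x|^{4}}=\frac{1}{8n(n+2)}\lim_{|x|\to+\infty}\Delta^{2}u(x)\in(0,+\infty).$$ (ii) Let $n\ge 2$, $q>0$, and let $u\in C^{6}(\mathbb{R}^{n})$, $u>0$, be a radially symmetric solution of $\Delta^{3}u=u^{-q}$ in $\mathbb{R}^{n}$. (a) If $\lim_{|x|\to+\infty}\Delta^{2}u(x)\in(0,+\infty]$, then $\liminf_{|x|\to+\infty}u(x)/|x|^{4}\in(0,+\infty]$; if moreover $n\ge 3$, $n\ne 4,6$ and $q>\frac12$, then the limit formula in (i) holds. (b) If $\lim_{|x|\to+\infty}\Delta^{2}u(x)=0$, then $\Delta^{2}u<0$ and $\Delta u>0$ in $\mathbb{R}^{n}$, and there is $C>0$ with $u(x)\le C|x|^{2}$ for all $|x|$ sufficiently large. *)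

theory Defs
  imports "HOL-Analysis.Analysis"
begin

text \<open>Points of R^n are vectors of type real^'n (n = CARD('n)).
  Partial derivative of f in the i-th coordinate direction.\<close>
definition partial :: "'n::finite \<Rightarrow> (real^'n \<Rightarrow> real) \<Rightarrow> real^'n \<Rightarrow> real" where
  "partial i f x = deriv (\<lambda>t. f (x + t *\<^sub>R axis i 1)) 0"

definition laplacian :: "(real^'n::finite \<Rightarrow> real) \<Rightarrow> real^'n \<Rightarrow> real" where
  "laplacian f x = (\<Sum>i\<in>UNIV. partial i (partial i f) x)"

fun Ck :: "nat \<Rightarrow> (real^'n::finite \<Rightarrow> real) \<Rightarrow> bool" where
  "Ck 0 f = continuous_on UNIV f"
| "Ck (Suc k) f = (continuous_on UNIV f \<and>
      (\<forall>i x. (\<lambda>t. f (x + t *\<^sub>R axis i 1)) differentiable (at 0)) \<and>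
      (\<forall>i. Ck k (partial i f)))"

definition radial :: "(real^'n::finite \<Rightarrow> real) \<Rightarrow> bool" where
  "radial u \<longleftrightarrow> (\<forall>x y. norm x = norm y \<longrightarrow> u x = u y)"

definition radial_sol :: "real \<Rightarrow> (real^'n::finite \<Rightarrow> real) \<Rightarrow> bool" where
  "radial_sol q u \<longleftrightarrow> Ck 6 u \<and> (\<forall>x. u x > 0) \<and> radial u \<and>
     (\<forall>x. laplacian (laplacian (laplacian u)) x = u x powr (- q))"

end

theory Submission
  imports Defs
begin


lemma Ck_cont: "Ck m f \<Longrightarrow> continuous_on UNIV f"
  by (cases m) simp_all

lemma Ck_diff: "Ck (Suc m) f \<Longrightarrow> (\<lambda>t. f (x + t *\<^sub>R axis i 1)) differentiable (at 0)"
  by simp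

lemma Ck_partial: "Ck (Suc m) f \<Longrightarrow> Ck m (partial i f)"
  by simp

lemma partial_add:
  assumes "\<forall>i x. (\<lambda>t. f (x + t *\<^sub>R axis i 1)) differentiable (at 0)"
      "\<forall>i x. (\<lambda>t. g (x + t *\<^sub>R axis i 1)) differentiable (at 0)"
  shows "partial i (\<lambda>x. f x + g x) = (\<lambda>x. partial i f x + partial i g x)"
proof (rule ext)
  fix x
  have a: "(\<lambda>t. f (x + t *\<^sub>R axis i 1)) field_differentiable (at 0)"
    using assms(1) unfolding field_differentiable_def real_differentiable_def by blast
  have b: "(\<lambda>t. g (x + t *\<^sub>R axis i 1)) field_differentiable (at 0)"
    using assms(2) unfolding field_differentiable_def real_differentiable_def by blast
  show "partial i (\<lambda>x. f x + g x) x = partial i f x + partial i g x"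
    unfolding partial_def by (rule deriv_add[OF a b])
qed

lemma partial_zero: "partial i (\<lambda>x. 0) = (\<lambda>x. 0)"
  unfolding partial_def by simp

lemma Ck_zero: "Ck m (\<lambda>x::real^'n::finite. 0::real)"
proof (induction m)
  case 0 then show ?case by simp
next
  case (Suc m)
  have "\<forall>i x. (\<lambda>t. (\<lambda>x::real^'n. 0::real) (x + t *\<^sub>R axis i 1)) differentiable (at 0)"
    by (simp add: differentiable_const)
  then show ?case using Suc by (simp add: partial_zero)
qed

lemma Ck_add: "Ck m f \<Longrightarrow> Ck m g \<Longrightarrow> Ck m (\<lambda>x. f x + g x)"
proof (induction m arbitrary: f g)
  case 0
  then show ?case by (simp add: continuous_on_add)
next
  case (Suc m)
  have df: "\<forall>i x. (\<lambda>t. f (x + t *\<^sub>R axis i 1)) differentiable (at 0)"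
    and dg: "\<forall>i x. (\<lambda>t. g (x + t *\<^sub>R axis i 1)) differentiable (at 0)"
    and cf: "continuous_on UNIV f" and cg: "continuous_on UNIV g"
    and pf: "\<forall>i. Ck m (partial i f)" and pg: "\<forall>i. Ck m (partial i g)"
    using Suc.prems by simp_all
  have d: "\<forall>i x. (\<lambda>t. f (x + t *\<^sub>R axis i 1) + g (x + t *\<^sub>R axis i 1)) differentiable (at 0)"
  proof (intro allI)
    fix i x
    show "(\<lambda>t. f (x + t *\<^sub>R axis i 1) + g (x + t *\<^sub>R axis i 1)) differentiable (at 0)"
      by (rule differentiable_add) (use df dg in simp_all)
  qed
  have p: "\<forall>i. Ck m (partial i (\<lambda>x. f x + g x))"
    unfolding partial_add[OF df dg] using pf pg Suc.IH by blast
  show ?case using d p cf cg by (simp add: continuous_on_add)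
qed

lemma Ck_sum: "finite A \<Longrightarrow> (\<forall>j\<in>A. Ck m (g j)) \<Longrightarrow> Ck m (\<lambda>x. \<Sum>j\<in>A. g j x)"
proof (induction A rule: finite_induct)
  case empty then show ?case using Ck_zero by simp
next
  case (insert a A)
  have "Ck m (\<lambda>x. g a x + (\<Sum>j\<in>A. g j x))"
    using insert by (intro Ck_add) simp_all
  then show ?case using insert by simp
qed

lemma Ck_lap: "Ck (Suc (Suc m)) f \<Longrightarrow> Ck m (laplacian f)"
proof -
  assume a: "Ck (Suc (Suc m)) f"
  have "laplacian f = (\<lambda>x. \<Sum>i\<in>UNIV. partial i (partial i f) x)"
    by (rule ext) (simp add: laplacian_def)
  moreover have "Ck m (\<lambda>x. \<Sum>i\<in>UNIV. partial i (partial i f) x)"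
    using a by (intro Ck_sum) simp_all
  ultimately show ?thesis by simp
qed

lemma ray_deriv:
  assumes "Ck (Suc m) g"
  shows "((\<lambda>r. g (r *\<^sub>R axis k 1)) has_real_derivative partial k g (r *\<^sub>R axis k 1)) (at r)"
proof -
  have "(\<lambda>t. g (r *\<^sub>R axis k 1 + t *\<^sub>R axis k 1)) differentiable (at 0)"
    using assms by simp
  then have "((\<lambda>t. g (r *\<^sub>R axis k 1 + t *\<^sub>R axis k 1)) has_real_derivative partial k g (r *\<^sub>R axis k 1)) (at 0)"
    unfolding partial_def by (simp add: DERIV_deriv_iff_real_differentiable)
  then have "((\<lambda>t. g ((t + r) *\<^sub>R axis k 1)) has_real_derivative partial k g (r *\<^sub>R axis k 1)) (at 0)"
    by (simp add: scaleR_add_left add.commute)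
  then show ?thesis using DERIV_shift[of "\<lambda>s. g (s *\<^sub>R axis k 1)" _ 0 r] by simp
qed


lemma norm_line:
  fixes y :: "real^'n::finite"
  shows "norm (y + t *\<^sub>R axis i 1) = sqrt (norm y ^ 2 + 2 * t * (y $ i) + t ^ 2)"
proof -
  have "norm (y + t *\<^sub>R axis i 1) ^ 2 = inner (y + t *\<^sub>R axis i 1) (y + t *\<^sub>R axis i 1)"
    by (rule power2_norm_eq_inner)
  also have "\<dots> = inner y y + 2 * t * (y $ i) + t ^ 2"
    by (simp add: inner_add_left inner_add_right inner_axis inner_axis' power2_eq_square algebra_simps)
  also have "inner y y = norm y ^ 2" by (simp add: power2_norm_eq_inner)
  finally show ?thesis by (metis norm_ge_zero real_sqrt_unique)
qed

lemma deriv_norm_line: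
  fixes y :: "real^'n::finite"
  assumes y: "y \<noteq> 0" and d: "(\<phi> has_real_derivative d) (at (norm y))"
  shows "((\<lambda>t. \<phi> (norm (y + t *\<^sub>R axis i 1))) has_real_derivative d * (y $ i / norm y)) (at 0)"
proof -
  have p: "norm y ^ 2 > 0" using y by simp
  have s: "sqrt (norm y ^ 2 + 2 * 0 * (y $ i) + 0 ^ 2) = norm y" by simp
  have "((\<lambda>t. sqrt (norm y ^ 2 + 2 * t * (y $ i) + t ^ 2)) has_real_derivative (y $ i / norm y)) (at 0)"
    using p y by (auto intro!: derivative_eq_intros simp: field_simps)
  then have "((\<lambda>t. \<phi> (sqrt (norm y ^ 2 + 2 * t * (y $ i) + t ^ 2))) has_real_derivative d * (y $ i / norm y)) (at 0)"
  proof -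
    have d': "(\<phi> has_real_derivative d) (at (sqrt (norm y ^ 2 + 2 * 0 * (y $ i) + 0 ^ 2)))"
      using d s by simp
    show ?thesis using DERIV_chain2[OF d' \<open>((\<lambda>t. sqrt (norm y ^ 2 + 2 * t * (y $ i) + t ^ 2)) has_real_derivative (y $ i / norm y)) (at 0)\<close>] by simp
  qed
  then show ?thesis by (simp add: norm_line)
qed

lemma partial_radial:
  fixes F :: "real^'n::finite \<Rightarrow> real"
  assumes F: "\<And>y. F y = \<phi> (norm y)"
    and d1: "\<And>r. r > 0 \<Longrightarrow> (\<phi> has_real_derivative \<phi>1 r) (at r)"
    and y: "y \<noteq> 0"
  shows "partial i F y = \<phi>1 (norm y) * (y $ i / norm y)"
proof -
  have "((\<lambda>t. F (y + t *\<^sub>R axis i 1)) has_real_derivative \<phi>1 (norm y) * (y $ i / norm y)) (at 0)"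
    using deriv_norm_line[OF y d1[of "norm y"]] y by (simp add: F)
  then show ?thesis unfolding partial_def by (rule DERIV_imp_deriv)
qed

lemma partial2_radial:
  fixes F :: "real^'n::finite \<Rightarrow> real"
  assumes F: "\<And>y. F y = \<phi> (norm y)"
    and d1: "\<And>r. r > 0 \<Longrightarrow> (\<phi> has_real_derivative \<phi>1 r) (at r)"
    and d2: "\<And>r. r > 0 \<Longrightarrow> (\<phi>1 has_real_derivative \<phi>2 r) (at r)"
    and x: "x \<noteq> 0"
  shows "partial i (partial i F) x =
     \<phi>2 (norm x) * (x $ i / norm x) * (x $ i / norm x) + \<phi>1 (norm x) * (1 / norm x - (x $ i)^2 / norm x ^ 3)"
proof -
  let ?e = "axis i (1::real)"
  have ev: "eventually (\<lambda>t. partial i F (x + t *\<^sub>R ?e) =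
      \<phi>1 (norm (x + t *\<^sub>R ?e)) * ((x $ i + t) / norm (x + t *\<^sub>R ?e))) (nhds 0)"
  proof -
    have "eventually (\<lambda>t::real. dist t 0 < norm x) (nhds 0)"
      using x by (intro eventually_nhds_metric[THEN iffD2] exI[of _ "norm x"]) (auto simp: dist_real_def)
    then show ?thesis
    proof eventually_elim
      case (elim t)
      have "norm x \<le> norm (x + t *\<^sub>R ?e) + norm (t *\<^sub>R ?e)"
        by (metis add_diff_cancel_right' norm_triangle_ineq4)
      then have "x + t *\<^sub>R ?e \<noteq> 0" using elim by auto
      then show ?case using partial_radial[OF F d1, of "x + t *\<^sub>R ?e" i] by simp
    qed
  qed
  have nx: "norm x > 0" using x by simp
  have g1: "((\<lambda>t. \<phi>1 (norm (x + t *\<^sub>R ?e))) has_real_derivative \<phi>2 (norm x) * (x $ i / norm x)) (at 0)"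
    by (rule deriv_norm_line[OF x d2[OF nx]])
  have g2: "((\<lambda>t. norm (x + t *\<^sub>R ?e)) has_real_derivative 1 * (x $ i / norm x)) (at 0)"
    by (rule deriv_norm_line[OF x DERIV_ident])
  have "((\<lambda>t. \<phi>1 (norm (x + t *\<^sub>R ?e)) * ((x $ i + t) / norm (x + t *\<^sub>R ?e))) has_real_derivative
     \<phi>2 (norm x) * (x $ i / norm x) * (x $ i / norm x) + \<phi>1 (norm x) * (1 / norm x - (x $ i)^2 / norm x ^ 3)) (at 0)"
    using g1 g2 nx
    by (auto intro!: derivative_eq_intros simp: field_simps power2_eq_square power3_eq_cube)
  then have "((\<lambda>t. partial i F (x + t *\<^sub>R ?e)) has_real_derivative
     \<phi>2 (norm x) * (x $ i / norm x) * (x $ i / norm x) + \<phi>1 (norm x) * (1 / norm x - (x $ i)^2 / norm x ^ 3)) (at 0)"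
    using DERIV_cong_ev[OF refl ev refl] by simp
  then show ?thesis unfolding partial_def[of i "partial i F"] by (rule DERIV_imp_deriv)
qed

lemma alg1: "(N::real) \<noteq> 0 \<Longrightarrow> a * (t / N) * (t / N) + b * (1 / N - t^2 / N^3) = a / N^2 * t^2 + (b / N - b / N^3 * t^2)"
  by (simp add: field_simps power2_eq_square power3_eq_cube)

lemma alg2: "(N::real) \<noteq> 0 \<Longrightarrow> a / N^2 * N^2 + (c * (b / N) - b / N^3 * N^2) = a + (c - 1) / N * b"
  by (simp add: field_simps power2_eq_square power3_eq_cube)

lemma sum_alg: "(\<Sum>i\<in>A. a / N ^ 2 * (x i)^2 + (b / N - b / N ^ 3 * (x i)^2)) = a / N ^ 2 * (\<Sum>i\<in>A. (x i)^2)
       + (real (card A) * (b / N) - b / N ^ 3 * (\<Sum>i\<in>A. (x i)^2))" for x :: "'a \<Rightarrow> real"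
    by (simp add: sum.distrib sum_subtractf sum_distrib_left)

lemma lap_radial:
  fixes F :: "real^'n::finite \<Rightarrow> real"
  assumes F: "\<And>y. F y = \<phi> (norm y)"
    and d1: "\<And>r. r > 0 \<Longrightarrow> (\<phi> has_real_derivative \<phi>1 r) (at r)"
    and d2: "\<And>r. r > 0 \<Longrightarrow> (\<phi>1 has_real_derivative \<phi>2 r) (at r)"
    and x: "x \<noteq> 0"
  shows "laplacian F x = \<phi>2 (norm x) + (real CARD('n) - 1) / norm x * \<phi>1 (norm x)"
proof -
  have nx: "norm x \<noteq> 0" using x by simp
  have sq: "(\<Sum>i\<in>UNIV. (x $ i)^2) = norm x ^ 2"
  proof -
    have "(\<Sum>i\<in>UNIV. (x $ i)^2) = inner x x" unfolding inner_vec_def by (simp add: power2_eq_square)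
    also have "\<dots> = norm x ^ 2" by (simp add: power2_norm_eq_inner)
    finally show ?thesis .
  qed
  have "laplacian F x = (\<Sum>i\<in>UNIV. partial i (partial i F) x)" by (simp add: laplacian_def)
  also have "\<dots> = (\<Sum>i\<in>UNIV. \<phi>2 (norm x) / norm x ^ 2 * (x $ i)^2
       + (\<phi>1 (norm x) / norm x - \<phi>1 (norm x) / norm x ^ 3 * (x $ i)^2))"
  proof (rule sum.cong[OF refl])
    fix i assume "i \<in> (UNIV :: 'n set)"
    show "partial i (partial i F) x = \<phi>2 (norm x) / norm x ^ 2 * (x $ i)^2
       + (\<phi>1 (norm x) / norm x - \<phi>1 (norm x) / norm x ^ 3 * (x $ i)^2)"
      by (rule trans[OF partial2_radial[OF F d1 d2 x] alg1[OF nx]])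
  qed
  also have "\<dots> = \<phi>2 (norm x) / norm x ^ 2 * (\<Sum>i\<in>UNIV. (x $ i)^2)
       + (real CARD('n) * (\<phi>1 (norm x) / norm x) - \<phi>1 (norm x) / norm x ^ 3 * (\<Sum>i\<in>UNIV. (x $ i)^2))"
    by (rule sum_alg)
  also have "\<dots> = \<phi>2 (norm x) + (real CARD('n) - 1) / norm x * \<phi>1 (norm x)"
    unfolding sq by (rule alg2[OF nx])
  finally show ?thesis .
qed


lemma psi_deriv:
  fixes h h' :: "real \<Rightarrow> real"
  assumes d: "\<And>r. (h has_real_derivative h' r) (at r)" and m: "m \<ge> 1"
  shows "((\<lambda>s. s^m * h s) has_real_derivative (real m * s^(m-1) * h s + s^m * h' s)) (at s)"
  using DERIV_mult[OF DERIV_pow[of m s UNIV] d[of s]] by (simp add: mult.commute)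

lemma psi_deriv_pos:
  fixes h h' :: "real \<Rightarrow> real"
  assumes d: "\<And>r. (h has_real_derivative h' r) (at r)" and m: "m \<ge> 1" and s: "s > 0"
  shows "((\<lambda>s. s^m * h s) has_real_derivative s^m * (h' s + real m / s * h s)) (at s)"
proof -
  obtain k where k: "m = Suc k" using m by (cases m) auto
  have e: "real m * s^(m-1) * h s + s^m * h' s = s^m * (h' s + real m / s * h s)"
    using s unfolding k by (simp add: field_simps)
  show ?thesis using psi_deriv[OF d m, of s] unfolding e .
qed

lemma psi_pos:
  fixes h h' :: "real \<Rightarrow> real"
  assumes m: "m \<ge> 1" and d: "\<And>r. (h has_real_derivative h' r) (at r)"
    and pos: "\<And>r. r > 0 \<Longrightarrow> h' r + real m / r * h r > 0"
    and r: "r > 0"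
  shows "h r > 0"
proof -
  have "(\<lambda>s. s^m * h s) 0 < (\<lambda>s. s^m * h s) r"
  proof (rule DERIV_pos_imp_increasing_open[OF r])
    fix s :: real assume s: "0 < s" "s < r"
    show "\<exists>y. ((\<lambda>s. s^m * h s) has_real_derivative y) (at s) \<and> y > 0"
      using psi_deriv_pos[OF d m s(1)] pos[OF s(1)] s(1)
      by (intro exI[of _ "s^m * (h' s + real m / s * h s)"] conjI) auto
  next
    show "continuous_on {0..r} (\<lambda>s. s^m * h s)"
      using psi_deriv[OF d m] by (intro continuous_at_imp_continuous_on ballI DERIV_isCont) blast
  qed
  moreover have "(0::real)^m = 0" using m by simp
  ultimately have "0 < r^m * h r" by simp
  then show ?thesis using r by (simp add: zero_less_mult_iff)
qed

lemma psi_neg: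
  fixes h h' :: "real \<Rightarrow> real"
  assumes m: "m \<ge> 1" and d: "\<And>r. (h has_real_derivative h' r) (at r)"
    and neg: "\<And>r. r > 0 \<Longrightarrow> h' r + real m / r * h r < 0"
    and r: "r > 0"
  shows "h r < 0"
proof -
  have "- h r > 0"
  proof (rule psi_pos[OF m, of "\<lambda>s. - h s" "\<lambda>s. - h' s"])
    show "\<And>r. ((\<lambda>s. - h s) has_real_derivative - h' r) (at r)" using d by (intro DERIV_minus)
    show "\<And>r. 0 < r \<Longrightarrow> 0 < - h' r + real m / r * - h r" using neg by (simp add: algebra_simps) (smt (verit) neg)
  qed (use r in auto)
  then show ?thesis by simp
qed

lemma incr_from0:
  fixes g g1 :: "real \<Rightarrow> real"
  assumes d: "\<And>r. (g has_real_derivative g1 r) (at r)" and p: "\<And>r. r > 0 \<Longrightarrow> g1 r > 0"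
    and a: "0 \<le> a" "a < b"
  shows "g a < g b"
proof (rule DERIV_pos_imp_increasing_open[OF a(2)])
  fix x assume "a < x" "x < b"
  then show "\<exists>y. (g has_real_derivative y) (at x) \<and> 0 < y" using d p a by (intro exI conjI) auto
next
  show "continuous_on {a..b} g" using d by (intro continuous_at_imp_continuous_on ballI DERIV_isCont) blast
qed

lemma decr_from0:
  fixes g g1 :: "real \<Rightarrow> real"
  assumes d: "\<And>r. (g has_real_derivative g1 r) (at r)" and p: "\<And>r. r > 0 \<Longrightarrow> g1 r < 0"
    and a: "0 \<le> a" "a < b"
  shows "g a > g b"
proof -
  have "- g a < - g b"
    by (rule incr_from0[of "\<lambda>r. - g r" "\<lambda>r. - g1 r"]) (use d p a in \<open>auto intro: DERIV_minus\<close>)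
  then show ?thesis by simp
qed

lemma grow:
  fixes G g :: "real \<Rightarrow> real"
  assumes R: "R > 0" and d: "\<And>r. r \<ge> R \<Longrightarrow> (G has_real_derivative g r) (at r)"
    and lb: "\<And>r. r \<ge> R \<Longrightarrow> g r \<ge> c * r^k" and c: "c > 0"
  shows "\<exists>R1\<ge>1. \<forall>r\<ge>R1. G r \<ge> c / (2 * (real k + 1)) * r^(Suc k)"
proof -
  define H where "H = (\<lambda>r. G r - c / (real k + 1) * r^(Suc k))"
  have H: "H R \<le> H r" if r: "r \<ge> R" for r
  proof (rule DERIV_nonneg_imp_nondecreasing[OF r])
    fix x assume x: "R \<le> x" "x \<le> r"
    have dp: "((\<lambda>r. r^Suc k) has_real_derivative real (Suc k) * x^k) (at x)"
      using DERIV_pow[of "Suc k" x UNIV] by simp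
    have "(H has_real_derivative g x - c / (real k + 1) * (real (Suc k) * x ^ k)) (at x)"
      unfolding H_def by (rule DERIV_diff[OF d[OF x(1)] DERIV_cmult[OF dp]])
    moreover have "c / (real k + 1) * (real (Suc k) * x ^ k) = c * x^k"
      by (simp add: field_simps)
    moreover have "g x - c / (real k + 1) * (real (Suc k) * x ^ k) \<ge> 0"
      using lb[OF x(1)] calculation(2) by linarith
    ultimately show "\<exists>y. (H has_real_derivative y) (at x) \<and> 0 \<le> y" by blast
  qed
  define K where "K = \<bar>H R\<bar>"
  define R1 where "R1 = max 1 (max R (2 * (real k + 1) * K / c))"
  have "G r \<ge> c / (2 * (real k + 1)) * r^(Suc k)" if r: "r \<ge> R1" for r
  proof -
    have r1: "r \<ge> 1" "r \<ge> R" "r \<ge> 2 * (real k + 1) * K / c" using r unfolding R1_def by auto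
    have "r ^ 1 \<le> r ^ Suc k" using r1(1) by (intro power_increasing) auto
    then have rr: "r \<le> r ^ Suc k" by simp
    have "2 * (real k + 1) * K / c \<le> r ^ Suc k" using r1 rr by linarith
    then have "K \<le> c / (2 * (real k + 1)) * r ^ Suc k" using c by (simp add: field_simps)
    moreover have "G r = H r + c / (real k + 1) * r^(Suc k)" unfolding H_def by simp
    moreover have "H r \<ge> - K" using H[OF r1(2)] unfolding K_def by linarith
    moreover have "c / (real k + 1) * r^(Suc k) = 2 * (c / (2 * (real k + 1)) * r ^ Suc k)"
    proof -
      have "2 * (c / (2 * (real k + 1))) = c / (real k + 1)"
        by (metis nonzero_mult_divide_mult_cancel_left times_divide_eq_right zero_neq_numeral)
      then show ?thesis by (metis mult.assoc)
    qed
    moreover have "\<And>A B Hr Gr::real. K \<le> A \<Longrightarrow> Gr = Hr + B \<Longrightarrow> -K \<le> Hr \<Longrightarrow> B = 2*A \<Longrightarrow> A \<le> Gr"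
      by linarith
    ultimately show ?thesis by blast
  qed
  moreover have "R1 \<ge> 1" unfolding R1_def by simp
  ultimately show ?thesis by blast
qed

lemma ub0:
  fixes G g :: "real \<Rightarrow> real"
  assumes d: "\<And>r. (G has_real_derivative g r) (at r)"
    and ub: "\<And>r. r > 0 \<Longrightarrow> g r \<le> c * r^k" and r: "r \<ge> 0"
  shows "G r \<le> G 0 + c / (real k + 1) * r^(Suc k)"
proof -
  define H where "H = (\<lambda>r. G r - c / (real k + 1) * r^(Suc k))"
  have dH: "(H has_real_derivative g x - c / (real k + 1) * (real (Suc k) * x ^ k)) (at x)" for x
  proof -
    have dp: "((\<lambda>r. r^Suc k) has_real_derivative real (Suc k) * x^k) (at x)"
      using DERIV_pow[of "Suc k" x UNIV] by simp
    show ?thesis unfolding H_def by (rule DERIV_diff[OF d[of x] DERIV_cmult[OF dp]])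
  qed
  have "H r \<le> H 0"
  proof (rule DERIV_nonpos_imp_decreasing_open[OF r])
    fix x :: real assume x: "0 < x" "x < r"
    have "c / (real k + 1) * (real (Suc k) * x ^ k) = c * x^k"
      by (simp add: field_simps)
    then have "g x - c / (real k + 1) * (real (Suc k) * x ^ k) \<le> 0"
      using ub[OF x(1)] by linarith
    then show "\<exists>y. (H has_real_derivative y) (at x) \<and> y \<le> 0" using dH by blast
  next
    show "continuous_on {0..r} H" using dH by (intro continuous_at_imp_continuous_on ballI DERIV_isCont) blast
  qed
  then show ?thesis unfolding H_def by simp
qed

lemma ubR:
  fixes G g :: "real \<Rightarrow> real"
  assumes R: "R > 0" and d: "\<And>r. r \<ge> R \<Longrightarrow> (G has_real_derivative g r) (at r)"
    and ub: "\<And>r. r \<ge> R \<Longrightarrow> g r \<le> c * r powr p" and p: "p \<noteq> -1" and r: "r \<ge> R"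
  shows "G r \<le> G R + c * (r powr (p+1) - R powr (p+1)) / (p+1)"
proof -
  define H where "H = (\<lambda>r. G r - c * r powr (p+1) / (p+1))"
  have "H r \<le> H R"
  proof (rule DERIV_nonpos_imp_nonincreasing[OF r])
    fix x assume x: "R \<le> x" "x \<le> r"
    have xp: "x > 0" using x R by simp
    have "(H has_real_derivative g x - c * ((p+1) * x powr (p + 1 - 1)) / (p+1)) (at x)"
      unfolding H_def using d[OF x(1)] xp by (auto intro!: derivative_eq_intros)
    moreover have "g x - c * ((p+1) * x powr (p + 1 - 1)) / (p+1) = g x - c * x powr p"
      using p by (simp add: field_simps)
    moreover have "g x - c * x powr p \<le> 0" using ub[OF x(1)] by simp
    ultimately show "\<exists>y. (H has_real_derivative y) (at x) \<and> y \<le> 0" by metis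
  qed
  then show ?thesis unfolding H_def by (simp add: field_simps diff_divide_distrib)
qed

lemma lh:
  fixes F F' :: "real \<Rightarrow> real"
  assumes d: "\<And>r. r > 0 \<Longrightarrow> (F has_real_derivative F' r) (at r)"
    and lim: "((\<lambda>r. F' r / ((real k + 1) * r^k)) \<longlongrightarrow> A) at_top"
  shows "((\<lambda>r. F r / r^(Suc k)) \<longlongrightarrow> A) at_top"
proof (rule lhospital_at_top_at_top[where g' = "\<lambda>r. (real k + 1) * r^k"])
  show "LIM x at_top. (x::real) ^ Suc k :> at_top"
  proof -
    have "filterlim (\<lambda>x::real. x) at_top at_top" by (rule filterlim_ident)
    from filterlim_pow_at_top[OF _ this, of "Suc k"] show ?thesis by simp
  qed
  show "\<forall>\<^sub>F x in at_top. (real k + 1) * x ^ k \<noteq> 0"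
    using eventually_gt_at_top[of 0] by eventually_elim simp
  show "\<forall>\<^sub>F x in at_top. (F has_real_derivative F' x) (at x)"
    using eventually_gt_at_top[of 0] by eventually_elim (rule d)
  show "\<forall>\<^sub>F x in at_top. ((\<lambda>x. x ^ Suc k) has_real_derivative (real k + 1) * x ^ k) (at x)"
  proof (intro always_eventually allI)
    fix x :: real
    show "((\<lambda>x. x ^ Suc k) has_real_derivative (real k + 1) * x ^ k) (at x)"
      using DERIV_pow[of "Suc k" x UNIV] by (simp add: add.commute)
  qed
qed (rule lim)


lemma div_pow:
  fixes s C y :: real
  assumes h: "C * s^(m + j) \<le> s^m * y" and s: "s > 0"
  shows "C * s^j \<le> y"
proof -
  have "s^m * (C * s^j) \<le> s^m * y" using h by (simp add: power_add algebra_simps)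
  then show ?thesis using s by (simp add: mult_le_cancel_left_pos)
qed

lemma div_pow':
  fixes s C y :: real
  assumes h: "s^m * y \<le> C * s^(m + j)" and s: "s > 0"
  shows "y \<le> C * s^j"
proof -
  have "s^m * y \<le> s^m * (C * s^j)" using h by (simp add: power_add algebra_simps)
  then show ?thesis using s by (simp add: mult_le_cancel_left_pos)
qed

locale prof =
  fixes n :: nat and q :: real and f f1 f2 v v1 v2 w w1 w2 :: "real \<Rightarrow> real"
  assumes n2: "n \<ge> 2"
  and df: "\<And>r. (f has_real_derivative f1 r) (at r)"
  and df1: "\<And>r. (f1 has_real_derivative f2 r) (at r)"
  and dv: "\<And>r. (v has_real_derivative v1 r) (at r)"
  and dv1: "\<And>r. (v1 has_real_derivative v2 r) (at r)"
  and dw: "\<And>r. (w has_real_derivative w1 r) (at r)"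
  and dw1: "\<And>r. (w1 has_real_derivative w2 r) (at r)"
  and fpos: "\<And>r. f r > 0"
  and E1: "\<And>r. r > 0 \<Longrightarrow> v r = f2 r + (real n - 1) / r * f1 r"
  and E2: "\<And>r. r > 0 \<Longrightarrow> w r = v2 r + (real n - 1) / r * v1 r"
  and E3: "\<And>r. r > 0 \<Longrightarrow> w2 r + (real n - 1) / r * w1 r = f r powr (-q)"
begin

lemma m1: "n - 1 \<ge> 1" using n2 by simp
lemma rm: "real (n - 1) = real n - 1" using n2 by simp
lemma sn: "Suc (n - 1) = n" using n2 by simp
lemma rm': "real (n - Suc 0) = real n - 1" using n2 by simp
lemma z0: "(0::real)^(n - Suc 0) = 0" using n2 by simp

lemma w1_pos: "r > 0 \<Longrightarrow> w1 r > 0"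
proof (rule psi_pos[OF m1 dw1])
  fix s :: real assume s: "s > 0"
  show "w2 s + real (n - 1) / s * w1 s > 0" unfolding rm E3[OF s] using fpos[of s] by simp
qed

lemma w_incr: "0 \<le> a \<Longrightarrow> a < b \<Longrightarrow> w a < w b"
  by (rule incr_from0[OF dw w1_pos])

lemma w_mono: "0 \<le> a \<Longrightarrow> a \<le> b \<Longrightarrow> w a \<le> w b"
proof (cases "a = b")
  case True then show ?thesis by simp
next
  case False
  assume "0 \<le> a" "a \<le> b"
  then have "a < b" using False by simp
  then show ?thesis using w_incr[of a b] \<open>0 \<le> a\<close> by simp
qed

lemma psi_f_d: "r > 0 \<Longrightarrow> ((\<lambda>s. s^(n-1) * f1 s) has_real_derivative r^(n-1) * v r) (at r)"
  using psi_deriv_pos[OF df1 m1, of r] E1[of r] by (simp add: rm rm')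

lemma psi_v_d: "r > 0 \<Longrightarrow> ((\<lambda>s. s^(n-1) * v1 s) has_real_derivative r^(n-1) * w r) (at r)"
  using psi_deriv_pos[OF dv1 m1, of r] E2[of r] by (simp add: rm rm')

lemma psi_w_d: "r > 0 \<Longrightarrow> ((\<lambda>s. s^(n-1) * w1 s) has_real_derivative r^(n-1) * f r powr (-q)) (at r)"
  using psi_deriv_pos[OF dw1 m1, of r] E3[of r] by (simp add: rm rm')

lemma neg_w:
  assumes wneg: "\<And>r. r > 0 \<Longrightarrow> w r < 0"
  shows v1neg: "\<And>r. r > 0 \<Longrightarrow> v1 r < 0"
    and fub: "\<And>r. r \<ge> 0 \<Longrightarrow> f r \<le> f 0 + v 0 / (2 * real n) * r^2"
proof -
  show v1neg: "\<And>r. r > 0 \<Longrightarrow> v1 r < 0"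
  proof (rule psi_neg[OF m1 dv1])
    fix s :: real assume s: "s > 0"
    show "v2 s + real (n - 1) / s * v1 s < 0" unfolding rm E2[OF s, symmetric] using wneg[OF s] .
  qed
  fix r :: real assume r: "r \<ge> 0"
  let ?g = "\<lambda>s. real (n-1) * s^(n-1-1) * f1 s + s^(n-1) * f2 s"
  have gP: "?g s \<le> v 0 * s^(n-1)" if s: "s > 0" for s
  proof -
    have "?g s = s^(n-1) * v s"
      using DERIV_unique[OF psi_deriv[OF df1 m1, of s] psi_f_d[OF s]] .
    moreover have "v s \<le> v 0" using decr_from0[OF dv v1neg, of 0 s] s by simp
    ultimately show ?thesis using s by (simp add: mult.commute mult_left_mono)
  qed
  have f1b: "f1 s \<le> v 0 / real n * s^1" if s: "s > 0" for s
  proof -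
    have "(\<lambda>s. s^(n-1) * f1 s) s \<le> (\<lambda>s. s^(n-1) * f1 s) 0 + v 0 / (real (n-1) + 1) * s^(Suc (n-1))"
      by (rule ub0[OF psi_deriv[OF df1 m1] gP]) (use s in auto)
    moreover have "(0::real)^(n-1) = 0" using m1 by simp
    ultimately have "s^(n-1) * f1 s \<le> v 0 / real n * s^((n-1) + 1)" using n2 z0 by (simp add: rm)
    then show ?thesis by (rule div_pow'[OF _ s])
  qed
  have "f r \<le> f 0 + v 0 / real n / (real 1 + 1) * r^(Suc 1)"
    by (rule ub0[OF df f1b r])
  then show "f r \<le> f 0 + v 0 / (2 * real n) * r^2" by (simp add: numeral_2_eq_2 mult.commute)
qed

lemma w_lim0:
  assumes lim: "(w \<longlongrightarrow> 0) at_top"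
  shows wneg0: "\<And>r. r \<ge> 0 \<Longrightarrow> w r < 0" and vpos0: "\<And>r. r \<ge> 0 \<Longrightarrow> v r > 0"
proof -
  show wneg: "\<And>r. r \<ge> 0 \<Longrightarrow> w r < 0"
  proof -
    fix r :: real assume r: "r \<ge> 0"
    have "w (r+1) \<le> 0"
    proof (rule tendsto_lowerbound[OF lim])
      show "\<forall>\<^sub>F i in at_top. w (r + 1) \<le> w i"
        using eventually_ge_at_top[of "r+1"] by eventually_elim (use r in \<open>auto intro: w_mono\<close>)
    qed simp
    then show "w r < 0" using w_incr[OF r, of "r+1"] by simp
  qed
  have v1n: "\<And>r. r > 0 \<Longrightarrow> v1 r < 0" by (rule neg_w(1)) (use wneg in auto)
  show "\<And>r. r \<ge> 0 \<Longrightarrow> v r > 0"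
  proof (rule ccontr)
    fix r0 :: real assume r0: "r0 \<ge> 0" and nv: "\<not> v r0 > 0"
    define c where "c = - v (r0 + 1)"
    have c: "c > 0" using decr_from0[OF dv v1n r0, of "r0+1"] nv unfolding c_def by simp
    have vc: "v s \<le> - c" if s: "s \<ge> r0 + 1" for s
      using decr_from0[OF dv v1n, of "r0+1" s] s r0 unfolding c_def by (cases "s = r0 + 1") auto
    obtain R1 where R1: "R1 \<ge> 1" and hR1: "\<forall>s\<ge>R1. - (s^(n-1) * f1 s) \<ge> c / (2 * (real (n-1) + 1)) * s^(Suc (n-1))"
    proof -
      have "\<exists>R1\<ge>1. \<forall>s\<ge>R1. (\<lambda>s. - (s^(n-1) * f1 s)) s \<ge> c / (2 * (real (n-1) + 1)) * s^(Suc (n-1))"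
      proof (rule grow[of "r0+1" _ "\<lambda>s. - (s^(n-1) * v s)"])
        show "0 < r0 + 1" using r0 by simp
        show "\<And>r. r0 + 1 \<le> r \<Longrightarrow> ((\<lambda>s. - (s ^ (n - 1) * f1 s)) has_real_derivative - (r ^ (n - 1) * v r)) (at r)"
          using psi_f_d r0 by (intro DERIV_minus) auto
        show "\<And>r. r0 + 1 \<le> r \<Longrightarrow> c * r ^ (n - 1) \<le> - (r ^ (n - 1) * v r)"
        proof -
          fix r :: real assume r: "r0 + 1 \<le> r"
          have "c \<le> - v r" using vc[OF r] by simp
          then have "c * r ^ (n - 1) \<le> (- v r) * r ^ (n - 1)" using r r0 by (intro mult_right_mono) auto
          then show "c * r ^ (n - 1) \<le> - (r ^ (n - 1) * v r)" by (simp add: mult.commute)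
        qed
      qed (rule c)
      then show ?thesis using that by auto
    qed
    have f1b: "- f1 s \<ge> c / (2 * real n) * s^1" if s: "s \<ge> R1" for s
    proof -
      have "c / (2 * real n) * s^((n-1) + 1) \<le> s^(n-1) * (- f1 s)"
        using hR1 s n2 by (simp add: rm)
      then show ?thesis by (rule div_pow) (use s R1 in auto)
    qed
    obtain R2 where R2: "R2 \<ge> 1" and hR2: "\<forall>s\<ge>R2. - f s \<ge> c / (2 * real n) / (2 * (real 1 + 1)) * s^(Suc 1)"
    proof -
      have "\<exists>R2\<ge>1. \<forall>s\<ge>R2. (\<lambda>s. - f s) s \<ge> c / (2 * real n) / (2 * (real 1 + 1)) * s^(Suc 1)"
      proof (rule grow[of R1 _ "\<lambda>s. - f1 s"])
        show "0 < R1" using R1 by simp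
        show "\<And>r. R1 \<le> r \<Longrightarrow> ((\<lambda>s. - f s) has_real_derivative - f1 r) (at r)"
          using df by (intro DERIV_minus)
        show "\<And>r. R1 \<le> r \<Longrightarrow> c / (2 * real n) * r ^ 1 \<le> - f1 r" using f1b by simp
        show "0 < c / (2 * real n)" using c n2 by simp
      qed
      then show ?thesis using that by auto
    qed
    have "0 < c / (2 * real n) / (2 * (real 1 + 1)) * R2^(Suc 1)" using c n2 R2 by simp
    also have "\<dots> \<le> - f R2" using hR2 by simp
    finally show False using fpos[of R2] by simp
  qed
qed

lemma lower:
  assumes a: "a > 0" and wa: "\<And>r. r \<ge> R \<Longrightarrow> w r \<ge> a"
  shows "\<exists>c>0. \<exists>R. \<forall>r\<ge>R. f r \<ge> c * r^4"
proof -
  define R0 where "R0 = max R 1"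
  have R0: "R0 > 0" "\<And>r. r \<ge> R0 \<Longrightarrow> w r \<ge> a" using wa unfolding R0_def by auto
  obtain R1 where R1: "R1 \<ge> 1" and hR1: "\<forall>s\<ge>R1. s^(n-1) * v1 s \<ge> a / (2 * (real (n-1) + 1)) * s^(Suc (n-1))"
  proof -
    have "\<exists>R1\<ge>1. \<forall>s\<ge>R1. (\<lambda>s. s^(n-1) * v1 s) s \<ge> a / (2 * (real (n-1) + 1)) * s^(Suc (n-1))"
    proof (rule grow[of R0 _ "\<lambda>s. s^(n-1) * w s"])
      show "\<And>r. R0 \<le> r \<Longrightarrow> ((\<lambda>s. s ^ (n - 1) * v1 s) has_real_derivative r ^ (n - 1) * w r) (at r)"
        using psi_v_d R0 by auto
      show "\<And>r. R0 \<le> r \<Longrightarrow> a * r ^ (n - 1) \<le> r ^ (n - 1) * w r"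
        using R0 by (auto simp: mult.commute intro!: mult_left_mono)
    qed (use R0 a in auto)
    then show ?thesis using that by auto
  qed
  define a1 where "a1 = a / (2 * real n)"
  have a1: "a1 > 0" using a n2 unfolding a1_def by simp
  have v1b: "v1 s \<ge> a1 * s^1" if s: "s \<ge> R1" for s
  proof -
    have "a1 * s^((n-1) + 1) \<le> s^(n-1) * v1 s"
      using hR1 s n2 unfolding a1_def by (simp add: rm)
    then show ?thesis by (rule div_pow) (use s R1 in auto)
  qed
  obtain R2 where R2: "R2 \<ge> 1" and hR2: "\<forall>s\<ge>R2. v s \<ge> a1 / (2 * (real 1 + 1)) * s^(Suc 1)"
  proof -
    have "\<exists>R2\<ge>1. \<forall>s\<ge>R2. v s \<ge> a1 / (2 * (real 1 + 1)) * s^(Suc 1)"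
      by (rule grow[of R1 _ v1]) (use R1 dv v1b a1 in auto)
    then show ?thesis using that by auto
  qed
  define a2 where "a2 = a1 / (2 * (real 1 + 1))"
  have a2: "a2 > 0" using a1 unfolding a2_def by simp
  obtain R3 where R3: "R3 \<ge> 1" and hR3: "\<forall>s\<ge>R3. s^(n-1) * f1 s \<ge> a2 / (2 * (real (n+1) + 1)) * s^(Suc (n+1))"
  proof -
    have "\<exists>R3\<ge>1. \<forall>s\<ge>R3. (\<lambda>s. s^(n-1) * f1 s) s \<ge> a2 / (2 * (real (n+1) + 1)) * s^(Suc (n+1))"
    proof (rule grow[of R2 _ "\<lambda>s. s^(n-1) * v s"])
      show "\<And>r. R2 \<le> r \<Longrightarrow> ((\<lambda>s. s ^ (n - 1) * f1 s) has_real_derivative r ^ (n - 1) * v r) (at r)"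
        using psi_f_d R2 by auto
      show "\<And>r. R2 \<le> r \<Longrightarrow> a2 * r ^ (n + 1) \<le> r ^ (n - 1) * v r"
      proof -
        fix r :: real assume r: "R2 \<le> r"
        have "a2 * r ^ (n + 1) = r^(n-1) * (a2 * r^Suc 1)"
        proof -
          have "n + 1 = (n - 1) + Suc 1" using n2 by simp
          then show ?thesis by (simp only: power_add) simp
        qed
        also have "\<dots> \<le> r^(n-1) * v r"
          using hR2 r R2 unfolding a2_def by (intro mult_left_mono) auto
        finally show "a2 * r ^ (n + 1) \<le> r ^ (n - 1) * v r" .
      qed
    qed (use R2 a2 in auto)
    then show ?thesis using that by auto
  qed
  define a3 where "a3 = a2 / (2 * (real (n+1) + 1))"
  have a3: "a3 > 0" using a2 unfolding a3_def by simp
  have f1b: "f1 s \<ge> a3 * s^3" if s: "s \<ge> R3" for s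
  proof -
    have "Suc (n+1) = (n-1) + 3" using n2 by simp
    then have "a3 * s^((n-1) + 3) \<le> s^(n-1) * f1 s"
      using hR3 s unfolding a3_def by metis
    then show ?thesis by (rule div_pow) (use s R3 in auto)
  qed
  obtain R4 where R4: "R4 \<ge> 1" and hR4: "\<forall>s\<ge>R4. f s \<ge> a3 / (2 * (real 3 + 1)) * s^(Suc 3)"
  proof -
    have "\<exists>R4\<ge>1. \<forall>s\<ge>R4. f s \<ge> a3 / (2 * (real 3 + 1)) * s^(Suc 3)"
      by (rule grow[of R3 _ f1]) (use R3 df f1b a3 in auto)
    then show ?thesis using that by auto
  qed
  show ?thesis
    using hR4 a3 by (intro exI[of _ "a3 / (2 * (real 3 + 1))"] conjI exI[of _ R4]) (auto simp: numeral_eq_Suc)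
qed


lemma w_bounded:
  assumes n3: "n \<ge> 3" and q: "q > 1/2" and c: "c > 0" and fc: "\<And>r. r \<ge> R \<Longrightarrow> f r \<ge> c * r^4"
  shows "\<exists>B. \<forall>r\<ge>0. w r \<le> B"
proof -
  define R1 where "R1 = max R 1"
  have R1: "R1 \<ge> 1" "\<And>r. r \<ge> R1 \<Longrightarrow> f r \<ge> c * r^4" using fc unfolding R1_def by auto
  define \<gamma> where "\<gamma> = min (4*q) (5/2)"
  have g: "\<gamma> > 2" "\<gamma> \<le> 4*q" "\<gamma> < real n" using q n3 unfolding \<gamma>_def by auto
  define K where "K = c powr (-q)"
  have K: "K > 0" using c unfolding K_def by simp
  have fb: "f r powr (-q) \<le> K * r powr (-\<gamma>)" if r: "r \<ge> R1" for r
  proof -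
    have rp: "r > 0" using r R1 by simp
    have "f r powr (-q) \<le> (c * r^4) powr (-q)"
      using R1(2)[OF r] c rp q by (intro powr_mono2') auto
    also have "(c * r^4) powr (-q) = K * r powr (-(4*q))"
    proof -
      have r4: "r^4 = r powr 4" using powr_realpow[OF rp, of 4] by simp
      have "(c * r^4) powr (-q) = c powr (-q) * (r powr 4) powr (-q)"
        unfolding r4 using c rp by (simp add: powr_mult)
      also have "(r powr 4) powr (-q) = r powr (-(4*q))" by (simp add: powr_powr)
      finally show ?thesis unfolding K_def .
    qed
    also have "K * r powr (-(4*q)) \<le> K * r powr (-\<gamma>)"
      using g r R1 K by (intro mult_left_mono powr_mono) auto
    finally show ?thesis .
  qed
  define p where "p = real n - 1 - \<gamma>"
  have p1: "p + 1 = real n - \<gamma>" unfolding p_def by simp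
  have pb: "r^(n-1) * f r powr (-q) \<le> K * r powr p" if r: "r \<ge> R1" for r
  proof -
    have rp: "r > 0" using r R1 by simp
    have e: "r^(n-1) = r powr (real n - 1)" using powr_realpow[OF rp, of "n-1"] by (simp add: rm rm')
    have "r^(n-1) * f r powr (-q) \<le> r^(n-1) * (K * r powr (-\<gamma>))"
      using fb[OF r] rp by (intro mult_left_mono) auto
    also have "\<dots> = K * r powr p" unfolding e p_def by (simp add: powr_add[symmetric] algebra_simps)
    finally show ?thesis .
  qed
  have pw: "s^(n-1) * w1 s \<le> R1^(n-1) * w1 R1 + K * (s powr (p+1) - R1 powr (p+1)) / (p+1)"
    if s: "s \<ge> R1" for s
    by (rule ubR[of R1 "\<lambda>s. s^(n-1) * w1 s" "\<lambda>s. s^(n-1) * f s powr (-q)" K p s])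
       (use R1 psi_w_d pb s g p1 in auto)
  define A where "A = \<bar>R1^(n-1) * w1 R1\<bar>"
  define M where "M = A + K / (real n - \<gamma>)"
  have M: "M \<ge> 0" using K g unfolding M_def A_def by simp
  have w1b: "w1 s \<le> M * s powr (1 - \<gamma>)" if s: "s \<ge> R1" for s
  proof -
    have sp: "s > 0" using s R1 by simp
    have P: "s^(n-1) = s powr (real n - 1)" using powr_realpow[OF sp, of "n-1"] by (simp add: rm rm')
    have dpos: "real n - \<gamma> > 0" using g by simp
    have "K * (s powr (p+1) - R1 powr (p+1)) / (p+1) =
        K / (real n - \<gamma>) * s powr (real n - \<gamma>) - K * R1 powr (real n - \<gamma>) / (real n - \<gamma>)"
      unfolding p1 by (simp add: diff_divide_distrib right_diff_distrib)
    moreover have "K * R1 powr (real n - \<gamma>) / (real n - \<gamma>) \<ge> 0" using K dpos by simp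
    ultimately have "K * (s powr (p+1) - R1 powr (p+1)) / (p+1) \<le> K / (real n - \<gamma>) * s powr (real n - \<gamma>)"
      by linarith
    then have h1: "s^(n-1) * w1 s \<le> A + K / (real n - \<gamma>) * s powr (real n - \<gamma>)"
      using pw[OF s] unfolding A_def by linarith
    have PQ: "s^(n-1) * s powr (1 - real n) = 1"
      unfolding P using sp by (simp add: powr_add[symmetric])
    have "w1 s = (s^(n-1) * s powr (1 - real n)) * w1 s" unfolding PQ by simp
    also have "\<dots> = (s^(n-1) * w1 s) * s powr (1 - real n)" by (simp only: ac_simps)
    finally have "w1 s = (s^(n-1) * w1 s) * s powr (1 - real n)" .
    also have "\<dots> \<le> (A + K / (real n - \<gamma>) * s powr (real n - \<gamma>)) * s powr (1 - real n)"
      using h1 by (intro mult_right_mono) auto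
    also have "\<dots> = A * s powr (1 - real n) + K / (real n - \<gamma>) * s powr (1 - \<gamma>)"
      by (simp add: algebra_simps powr_add[symmetric])
    also have "\<dots> \<le> A * s powr (1 - \<gamma>) + K / (real n - \<gamma>) * s powr (1 - \<gamma>)"
      using g s R1 unfolding A_def by (intro add_right_mono mult_left_mono powr_mono) auto
    also have "\<dots> = M * s powr (1 - \<gamma>)" unfolding M_def by (simp add: algebra_simps)
    finally show ?thesis .
  qed
  define B where "B = w R1 + M * R1 powr (2 - \<gamma>) / (\<gamma> - 2)"
  have BR: "w R1 \<le> B" unfolding B_def using M g by simp
  have wb: "w s \<le> B" if s: "s \<ge> R1" for s
  proof -
    have "w s \<le> w R1 + M * (s powr (1 - \<gamma> + 1) - R1 powr (1 - \<gamma> + 1)) / (1 - \<gamma> + 1)"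
      by (rule ubR[of R1 w w1 M "1 - \<gamma>" s]) (use R1 dw w1b s g in auto)
    also have "M * (s powr (1 - \<gamma> + 1) - R1 powr (1 - \<gamma> + 1)) / (1 - \<gamma> + 1)
        = M * (R1 powr (2 - \<gamma>) - s powr (2 - \<gamma>)) / (\<gamma> - 2)"
      using g by (simp add: field_simps)
    also have "\<dots> \<le> M * R1 powr (2 - \<gamma>) / (\<gamma> - 2)"
      using M g by (intro divide_right_mono mult_left_mono) auto
    finally show ?thesis unfolding B_def by simp
  qed
  have "\<forall>r\<ge>0. w r \<le> B"
  proof (intro allI impI)
    fix r :: real assume r: "r \<ge> 0"
    show "w r \<le> B"
    proof (cases "r \<le> R1")
      case True then show ?thesis using w_mono[OF r True] BR by simp
    next
      case False then show ?thesis using wb by simp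
    qed
  qed
  then show ?thesis by blast
qed

lemma w_conv:
  assumes B: "\<And>r. r \<ge> 0 \<Longrightarrow> w r \<le> B"
  shows "\<exists>L. (w \<longlongrightarrow> L) at_top \<and> (\<forall>r\<ge>0. w r < L)"
proof -
  define L where "L = Sup (w ` {0..})"
  have bdd: "bdd_above (w ` {0..})" using B by (auto intro!: bdd_aboveI)
  have le: "w r \<le> L" if "r \<ge> 0" for r
    unfolding L_def using bdd that by (intro cSUP_upper) auto
  have lim: "(w \<longlongrightarrow> L) at_top"
  proof (rule order_tendstoI)
    fix a assume a: "a < L"
    then obtain r0 where r0: "r0 \<ge> 0" "a < w r0"
      unfolding L_def using less_cSUP_iff[OF _ bdd, of a] by auto
    show "\<forall>\<^sub>F x in at_top. a < w x"
      using eventually_ge_at_top[of r0] by eventually_elim (use r0 w_mono in force)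
  next
    fix b assume b: "L < b"
    show "\<forall>\<^sub>F x in at_top. w x < b"
      using eventually_ge_at_top[of 0] by eventually_elim (use le b in force)
  qed
  have "w r < L" if r: "r \<ge> 0" for r
    using w_incr[OF r, of "r+1"] le[of "r+1"] r by simp
  then show ?thesis using lim by blast
qed

lemma asym:
  assumes lim: "(w \<longlongrightarrow> L) at_top"
  shows "((\<lambda>r. f r / r^4) \<longlongrightarrow> L / (8 * real n * (real n + 2))) at_top"
proof -
  have np: "real n > 0" using n2 by simp
  have S1: "((\<lambda>r. r^(n-1) * v1 r / r^(Suc (n-1))) \<longlongrightarrow> L / real n) at_top"
  proof (rule lh)
    show "\<And>r. 0 < r \<Longrightarrow> ((\<lambda>s. s^(n-1) * v1 s) has_real_derivative r^(n-1) * w r) (at r)"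
      by (rule psi_v_d)
    have "((\<lambda>r. w r / real n) \<longlongrightarrow> L / real n) at_top" by (intro tendsto_divide lim) (use np in auto)
    moreover have "\<forall>\<^sub>F r in at_top. w r / real n = r^(n-1) * w r / ((real (n-1) + 1) * r^(n-1))"
      using eventually_gt_at_top[of 0] by eventually_elim (simp add: rm rm')
    ultimately show "((\<lambda>r. r^(n-1) * w r / ((real (n-1) + 1) * r^(n-1))) \<longlongrightarrow> L / real n) at_top"
      by (rule Lim_transform_eventually)
  qed
  have p1: "r^(n+1) = r^(n-1) * r^2" for r :: real
  proof -
    have "n + 1 = (n-1) + 2" using n2 by simp
    then show ?thesis by (metis power_add)
  qed
  have p2: "r^(Suc (n+1)) = r^(n-1) * r^3" for r :: real
  proof -
    have "Suc (n + 1) = (n-1) + 3" using n2 by simp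
    then show ?thesis by (metis power_add)
  qed
  have S2: "((\<lambda>r. v1 r / r) \<longlongrightarrow> L / real n) at_top"
  proof -
    have "\<forall>\<^sub>F r in at_top. r^(n-1) * v1 r / r^(Suc (n-1)) = v1 r / r"
      using eventually_gt_at_top[of 0] by eventually_elim (simp add: field_simps)
    then show ?thesis by (rule Lim_transform_eventually[OF S1])
  qed
  have S3: "((\<lambda>r. v r / r^(Suc 1)) \<longlongrightarrow> L / real n / 2) at_top"
  proof (rule lh)
    show "\<And>r. 0 < r \<Longrightarrow> (v has_real_derivative v1 r) (at r)" by (rule dv)
    have "((\<lambda>r. v1 r / r / 2) \<longlongrightarrow> L / real n / 2) at_top" by (intro tendsto_divide S2) auto
    moreover have "\<forall>\<^sub>F r in at_top. v1 r / r / 2 = v1 r / ((real 1 + 1) * r^1)"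
      using eventually_gt_at_top[of 0] by eventually_elim simp
    ultimately show "((\<lambda>r. v1 r / ((real 1 + 1) * r^1)) \<longlongrightarrow> L / real n / 2) at_top"
      by (rule Lim_transform_eventually)
  qed
  have S4: "((\<lambda>r. r^(n-1) * f1 r / r^(Suc (n+1))) \<longlongrightarrow> L / real n / 2 / (real n + 2)) at_top"
  proof (rule lh)
    show "\<And>r. 0 < r \<Longrightarrow> ((\<lambda>s. s^(n-1) * f1 s) has_real_derivative r^(n-1) * v r) (at r)"
      by (rule psi_f_d)
    have "((\<lambda>r. v r / r^(Suc 1) / (real n + 2)) \<longlongrightarrow> L / real n / 2 / (real n + 2)) at_top"
      by (intro tendsto_divide S3) auto
    moreover have "\<forall>\<^sub>F r in at_top. v r / r^(Suc 1) / (real n + 2) = r^(n-1) * v r / ((real (n+1) + 1) * r^(n+1))"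
      using eventually_gt_at_top[of 0]
    proof eventually_elim
      case (elim r)
      have X: "r^(n-1) \<noteq> 0" using elim by simp
      have D: "real (n+1) + 1 \<noteq> 0" by simp
      have "r^(n-1) * v r / ((real (n+1) + 1) * r^(n+1)) = (r^(n-1) * v r) / (r^(n-1) * ((real (n+1) + 1) * r^2))"
        unfolding p1 by (simp only: ac_simps)
      also have "\<dots> = v r / ((real (n+1) + 1) * r^2)"
        by (rule nonzero_mult_divide_mult_cancel_left[OF X])
      also have "\<dots> = v r / r^Suc 1 / (real n + 2)" by (simp add: field_simps power2_eq_square)
      finally show ?case by simp
    qed
    ultimately show "((\<lambda>r. r^(n-1) * v r / ((real (n+1) + 1) * r^(n+1))) \<longlongrightarrow> L / real n / 2 / (real n + 2)) at_top"
      by (rule Lim_transform_eventually)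
  qed
  have S5: "((\<lambda>r. f1 r / r^3) \<longlongrightarrow> L / real n / 2 / (real n + 2)) at_top"
  proof -
    have "\<forall>\<^sub>F r in at_top. r^(n-1) * f1 r / r^(Suc (n+1)) = f1 r / r^3"
      using eventually_gt_at_top[of 0]
    proof eventually_elim
      case (elim r)
      show ?case by (simp only: p2) (use elim in \<open>simp add: field_simps\<close>)
    qed
    then show ?thesis by (rule Lim_transform_eventually[OF S4])
  qed
  have S6: "((\<lambda>r. f r / r^(Suc 3)) \<longlongrightarrow> L / real n / 2 / (real n + 2) / 4) at_top"
  proof (rule lh)
    show "\<And>r. 0 < r \<Longrightarrow> (f has_real_derivative f1 r) (at r)" by (rule df)
    have "((\<lambda>r. f1 r / r^3 / 4) \<longlongrightarrow> L / real n / 2 / (real n + 2) / 4) at_top"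
      by (intro tendsto_divide S5) auto
    moreover have "\<forall>\<^sub>F r in at_top. f1 r / r^3 / 4 = f1 r / ((real 3 + 1) * r^3)"
      using eventually_gt_at_top[of 0] by eventually_elim simp
    ultimately show "((\<lambda>r. f1 r / ((real 3 + 1) * r^3)) \<longlongrightarrow> L / real n / 2 / (real n + 2) / 4) at_top"
      by (rule Lim_transform_eventually)
  qed
  have e: "L / real n / 2 / (real n + 2) / 4 = L / (8 * real n * (real n + 2))" by simp
  show ?thesis using S6 unfolding e by (simp add: numeral_eq_Suc)
qed

end


lemma ray_norm: "norm (r *\<^sub>R axis k (1::real)) = \<bar>r\<bar>"
  by simp

lemma sol_prof:
  fixes u :: "real^'n::finite \<Rightarrow> real" and k :: 'n
  assumes sol: "radial_sol q u" and n2: "CARD('n) \<ge> 2"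
  defines "P \<equiv> \<lambda>g r. g (r *\<^sub>R axis k (1::real))"
  shows "prof CARD('n) q (P u) (P (partial k u)) (P (partial k (partial k u)))
      (P (laplacian u)) (P (partial k (laplacian u))) (P (partial k (partial k (laplacian u))))
      (P (laplacian (laplacian u))) (P (partial k (laplacian (laplacian u))))
      (P (partial k (partial k (laplacian (laplacian u)))))"
    and "\<And>y. u y = P u (norm y)"
    and "\<And>y. laplacian u y = P (laplacian u) (norm y)"
    and "\<And>y. laplacian (laplacian u) y = P (laplacian (laplacian u)) (norm y)"
proof -
  let ?e = "axis k (1::real)"
  have C6: "Ck 6 u" and upos: "\<And>x. u x > 0" and rad: "radial u"
    and eq: "\<And>x. laplacian (laplacian (laplacian u)) x = u x powr (- q)"
    using sol unfolding radial_sol_def by auto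
  have C4: "Ck 4 (laplacian u)" using Ck_lap[of 4 u] C6 by (simp add: numeral_eq_Suc)
  have C2: "Ck 2 (laplacian (laplacian u))" using Ck_lap[of 2 "laplacian u"] C4 by (simp add: numeral_eq_Suc)
  have D: "((P g) has_real_derivative P (partial k g) r) (at r)" if "Ck (Suc m) g" for g m r
    unfolding P_def by (rule ray_deriv[OF that])
  have C6': "Ck (Suc 5) u" using C6 by (simp add: numeral_eq_Suc)
  have C5': "Ck (Suc 4) (partial k u)" using C6 by (simp add: numeral_eq_Suc)
  have C4': "Ck (Suc 3) (laplacian u)" using C4 by (simp add: numeral_eq_Suc)
  have C3': "Ck (Suc 2) (partial k (laplacian u))" using C4 by (simp add: numeral_eq_Suc)
  have C2': "Ck (Suc 1) (laplacian (laplacian u))" using C2 by (simp add: numeral_eq_Suc)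
  have C1': "Ck (Suc 0) (partial k (laplacian (laplacian u)))" using C2 by (simp add: numeral_eq_Suc)
  have nP: "norm (r *\<^sub>R ?e) = r" if "r \<ge> 0" for r using that by simp
  have Pnorm: "P g (norm y) = g (norm y *\<^sub>R ?e)" for g and y :: "real^'n" unfolding P_def ..
  have Fu: "u y = P u (norm y)" for y
  proof -
    have "norm y = norm (norm y *\<^sub>R ?e)" by simp
    then show ?thesis using rad unfolding radial_def Pnorm by blast
  qed
  have r0: "r *\<^sub>R ?e \<noteq> 0" if "r > 0" for r using that by (simp add: axis_eq_0_iff)
  have L1: "laplacian u x = P (partial k (partial k u)) (norm x) + (real CARD('n) - 1) / norm x * P (partial k u) (norm x)"
    if "x \<noteq> 0" for x
    by (rule lap_radial[OF Fu D[OF C6'] D[OF C5'] that])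
  have Fv: "laplacian u y = P (laplacian u) (norm y)" for y
  proof (cases "y = 0")
    case True then show ?thesis unfolding P_def by simp
  next
    case False
    have "P (laplacian u) (norm y) = laplacian u (norm y *\<^sub>R ?e)" unfolding P_def ..
    also have "\<dots> = P (partial k (partial k u)) (norm y) + (real CARD('n) - 1) / norm y * P (partial k u) (norm y)"
      using L1[OF r0] False by simp
    finally show ?thesis using L1[OF False] by simp
  qed
  have L2: "laplacian (laplacian u) x = P (partial k (partial k (laplacian u))) (norm x) + (real CARD('n) - 1) / norm x * P (partial k (laplacian u)) (norm x)"
    if "x \<noteq> 0" for x
    by (rule lap_radial[OF Fv D[OF C4'] D[OF C3'] that])
  have Fw: "laplacian (laplacian u) y = P (laplacian (laplacian u)) (norm y)" for y
  proof (cases "y = 0")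
    case True then show ?thesis unfolding P_def by simp
  next
    case False
    have "P (laplacian (laplacian u)) (norm y) = laplacian (laplacian u) (norm y *\<^sub>R ?e)" unfolding P_def ..
    also have "\<dots> = P (partial k (partial k (laplacian u))) (norm y) + (real CARD('n) - 1) / norm y * P (partial k (laplacian u)) (norm y)"
      using L2[OF r0] False by simp
    finally show ?thesis using L2[OF False] by simp
  qed
  have L3: "laplacian (laplacian (laplacian u)) x = P (partial k (partial k (laplacian (laplacian u)))) (norm x) + (real CARD('n) - 1) / norm x * P (partial k (laplacian (laplacian u))) (norm x)"
    if "x \<noteq> 0" for x
    by (rule lap_radial[OF Fw D[OF C2'] D[OF C1'] that])
  show "prof CARD('n) q (P u) (P (partial k u)) (P (partial k (partial k u)))
      (P (laplacian u)) (P (partial k (laplacian u))) (P (partial k (partial k (laplacian u))))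
      (P (laplacian (laplacian u))) (P (partial k (laplacian (laplacian u))))
      (P (partial k (partial k (laplacian (laplacian u)))))"
  proof
    show "2 \<le> CARD('n)" by (rule n2)
    show "\<And>r. (P u has_real_derivative P (partial k u) r) (at r)" by (rule D[OF C6'])
    show "\<And>r. (P (partial k u) has_real_derivative P (partial k (partial k u)) r) (at r)" by (rule D[OF C5'])
    show "\<And>r. (P (laplacian u) has_real_derivative P (partial k (laplacian u)) r) (at r)" by (rule D[OF C4'])
    show "\<And>r. (P (partial k (laplacian u)) has_real_derivative P (partial k (partial k (laplacian u))) r) (at r)" by (rule D[OF C3'])
    show "\<And>r. (P (laplacian (laplacian u)) has_real_derivative P (partial k (laplacian (laplacian u))) r) (at r)" by (rule D[OF C2'])
    show "\<And>r. (P (partial k (laplacian (laplacian u))) has_real_derivative P (partial k (partial k (laplacian (laplacian u)))) r) (at r)" by (rule D[OF C1'])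
    show "\<And>r. 0 < P u r" unfolding P_def by (rule upos)
    show "P (laplacian u) r = P (partial k (partial k u)) r + (real CARD('n) - 1) / r * P (partial k u) r" if "0 < r" for r
      using L1[OF r0[OF that]] nP[of r] that unfolding P_def by simp
    show "P (laplacian (laplacian u)) r = P (partial k (partial k (laplacian u))) r + (real CARD('n) - 1) / r * P (partial k (laplacian u)) r" if "0 < r" for r
      using L2[OF r0[OF that]] nP[of r] that unfolding P_def by simp
    show "P (partial k (partial k (laplacian (laplacian u)))) r + (real CARD('n) - 1) / r * P (partial k (laplacian (laplacian u))) r = P u r powr - q" if "0 < r" for r
      using L3[OF r0[OF that]] nP[of r] that eq[of "r *\<^sub>R ?e"] unfolding P_def by simp
  qed
  show "\<And>y. u y = P u (norm y)" by (rule Fu)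
  show "\<And>y. laplacian u y = P (laplacian u) (norm y)" by (rule Fv)
  show "\<And>y. laplacian (laplacian u) y = P (laplacian (laplacian u)) (norm y)" by (rule Fw)
qed


lemma contra_growth:
  fixes F :: "real \<Rightarrow> real"
  assumes c: "c > 0" and lb: "\<And>r. r \<ge> R \<Longrightarrow> c * r^4 \<le> F r"
    and ub: "\<And>r. r \<ge> 0 \<Longrightarrow> F r \<le> a + b * r^2"
  shows False
proof -
  define A where "A = \<bar>a\<bar> + \<bar>b\<bar>"
  define r where "r = max (max R 1) (A / c + 1)"
  have r1: "r \<ge> 1" "r \<ge> R" "r \<ge> A / c + 1" unfolding r_def by auto
  have r2: "r^2 \<ge> 1" using r1(1) by (simp add: one_le_power)
  have rr: "r^2 \<ge> r" using r1(1) by (simp add: power2_eq_square)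
  have "\<bar>a\<bar> * 1 \<le> \<bar>a\<bar> * r^2" using r2 by (intro mult_left_mono) auto
  then have "a \<le> \<bar>a\<bar> * r^2" using abs_ge_self[of a] by linarith
  moreover have "b * r^2 \<le> \<bar>b\<bar> * r^2" by (intro mult_right_mono) auto
  moreover have "A * r^2 = \<bar>a\<bar> * r^2 + \<bar>b\<bar> * r^2" unfolding A_def by (simp add: distrib_right)
  moreover have "c * r^4 \<le> F r" by (rule lb[OF r1(2)])
  moreover have "F r \<le> a + b * r^2" using ub[of r] r1(1) by simp
  ultimately have h1: "c * r^4 \<le> A * r^2" by linarith
  have "c * (A / c + 1) \<le> c * r" using r1(3) c by (intro mult_left_mono) auto
  moreover have "c * r \<le> c * r^2" using rr c by (intro mult_left_mono) auto
  moreover have "c * (A / c + 1) = A + c" using c by (simp add: field_simps)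
  ultimately have h2: "A < c * r^2" using c by linarith
  have "A * r^2 < (c * r^2) * r^2" using h2 r2 by (intro mult_strict_right_mono) auto
  also have "\<dots> = c * r^4" by (simp add: power_mult_distrib[symmetric] mult.assoc power2_eq_square numeral_eq_Suc)
  finally show False using h1 by simp
qed

lemma quad_bound:
  fixes F a b r :: real
  assumes r: "r \<ge> 1" and h: "F \<le> a + b * r^2"
  shows "F \<le> (\<bar>a\<bar> + \<bar>b\<bar> + 1) * r^2"
proof -
  have r2: "r^2 \<ge> 1" using r by (simp add: one_le_power)
  have "\<bar>a\<bar> * 1 \<le> \<bar>a\<bar> * r^2" using r2 by (intro mult_left_mono) auto
  then have "a \<le> \<bar>a\<bar> * r^2" using abs_ge_self[of a] by linarith
  moreover have "b * r^2 \<le> \<bar>b\<bar> * r^2" by (intro mult_right_mono) auto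
  moreover have "(\<bar>a\<bar> + \<bar>b\<bar> + 1) * r^2 = \<bar>a\<bar> * r^2 + \<bar>b\<bar> * r^2 + r^2" by (simp add: distrib_right)
  ultimately show ?thesis using h r2 by linarith
qed

lemma ray_at_infinity: "filterlim (\<lambda>r::real. r *\<^sub>R axis k (1::real)) at_infinity at_top"
  unfolding filterlim_at_infinity_conv_norm_at_top filterlim_at_top
proof
  fix Z :: real
  show "\<forall>\<^sub>F x in at_top. Z \<le> norm (x *\<^sub>R axis k (1::real))"
    using eventually_ge_at_top[of Z] by eventually_elim simp
qed

lemma main_u:
  fixes u :: "real^'n::finite \<Rightarrow> real"
  assumes sol: "radial_sol q u" and n2: "CARD('n) \<ge> 2"
  shows partA: "CARD('n) \<ge> 3 \<Longrightarrow> q > 1/2 \<Longrightarrow> Liminf at_infinity (\<lambda>x. ereal (u x / norm x ^ 4)) > 0 \<Longrightarrow>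
      (\<exists>L>0. (laplacian (laplacian u) \<longlongrightarrow> L) at_infinity \<and>
             ((\<lambda>x. u x / norm x ^ 4) \<longlongrightarrow> L / (8 * real CARD('n) * (real CARD('n) + 2))) at_infinity)"
    and partB: "L > 0 \<Longrightarrow> ((\<lambda>x. ereal (laplacian (laplacian u) x)) \<longlongrightarrow> L) at_infinity \<Longrightarrow>
      Liminf at_infinity (\<lambda>x. ereal (u x / norm x ^ 4)) > 0"
    and partC: "(laplacian (laplacian u) \<longlongrightarrow> 0) at_infinity \<Longrightarrow>
          (\<forall>x. laplacian (laplacian u) x < 0 \<and> laplacian u x > 0) \<and>
          (\<exists>C>0. \<exists>R. \<forall>x. norm x \<ge> R \<longrightarrow> u x \<le> C * (norm x)\<^sup>2)"
proof -
  obtain k :: 'n where True by simp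
  define P where "P \<equiv> \<lambda>(g::real^'n \<Rightarrow> real) r. g (r *\<^sub>R axis k (1::real))"
  note SP = sol_prof[OF sol n2, where k=k]
  interpret p: prof "CARD('n)" q "P u" "P (partial k u)" "P (partial k (partial k u))"
      "P (laplacian u)" "P (partial k (laplacian u))" "P (partial k (partial k (laplacian u)))"
      "P (laplacian (laplacian u))" "P (partial k (laplacian (laplacian u)))"
      "P (partial k (partial k (laplacian (laplacian u))))"
    using SP(1) unfolding P_def by simp
  have Fu: "\<And>y. u y = P u (norm y)" using SP(2) unfolding P_def by simp
  have Fv: "\<And>y. laplacian u y = P (laplacian u) (norm y)" using SP(3) unfolding P_def by simp
  have Fw: "\<And>y. laplacian (laplacian u) y = P (laplacian (laplacian u)) (norm y)" using SP(4) unfolding P_def by simp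
  have Pn: "P g r = g (r *\<^sub>R axis k 1)" for g :: "real^'n \<Rightarrow> real" and r unfolding P_def ..
  have nr: "norm (r *\<^sub>R axis k (1::real)) = r" if "r \<ge> 0" for r using that by simp
  have comp: "((\<lambda>x. h (norm x)) \<longlongrightarrow> A) at_infinity" if "(h \<longlongrightarrow> A) at_top" for h :: "real \<Rightarrow> real" and A
    using filterlim_compose[OF that filterlim_norm_at_top] by simp
  have ww: "laplacian (laplacian u) = (\<lambda>x. P (laplacian (laplacian u)) (norm x))" using Fw by (rule ext)
  have uu: "(\<lambda>x. u x / norm x ^ 4) = (\<lambda>x. P u (norm x) / norm x ^ 4)" using Fu by (intro ext) simp
  show "CARD('n) \<ge> 3 \<Longrightarrow> q > 1/2 \<Longrightarrow> Liminf at_infinity (\<lambda>x. ereal (u x / norm x ^ 4)) > 0 \<Longrightarrow>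
      (\<exists>L>0. (laplacian (laplacian u) \<longlongrightarrow> L) at_infinity \<and>
             ((\<lambda>x. u x / norm x ^ 4) \<longlongrightarrow> L / (8 * real CARD('n) * (real CARD('n) + 2))) at_infinity)"
  proof -
    assume n3: "CARD('n) \<ge> 3" and q: "q > 1/2" and li: "Liminf at_infinity (\<lambda>x. ereal (u x / norm x ^ 4)) > 0"
    obtain c0 where c0: "0 < ereal c0" "ereal c0 < Liminf at_infinity (\<lambda>x. ereal (u x / norm x ^ 4))"
      using ereal_dense2[OF li] by blast
    have all: "\<forall>y<Liminf at_infinity (\<lambda>x. ereal (u x / norm x ^ 4)). eventually (\<lambda>x. y < ereal (u x / norm x ^ 4)) at_infinity"
      using le_Liminf_iff[of "Liminf at_infinity (\<lambda>x. ereal (u x / norm x ^ 4))" at_infinity "\<lambda>x. ereal (u x / norm x ^ 4)"]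
      by (simp only: order_refl simp_thms)
    have "eventually (\<lambda>x. ereal c0 < ereal (u x / norm x ^ 4)) at_infinity"
      using all[rule_format, OF c0(2)] .
    then obtain b where b: "\<And>x. b \<le> norm x \<Longrightarrow> ereal c0 < ereal (u x / norm x ^ 4)"
      unfolding eventually_at_infinity by blast
    have c0p: "c0 > 0" using c0(1) by simp
    have fc: "P u r \<ge> c0 * r^4" if r: "r \<ge> max b 1" for r
    proof -
      have r1: "r \<ge> 1" "r \<ge> b" using r by auto
      have "c0 < u (r *\<^sub>R axis k 1) / r ^ 4" using b[of "r *\<^sub>R axis k 1"] r1 nr[of r] by simp
      then show ?thesis using r1 unfolding Pn by (simp add: pos_less_divide_eq less_imp_le)
    qed
    obtain B where B: "\<forall>r\<ge>0. P (laplacian (laplacian u)) r \<le> B"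
      using p.w_bounded[OF n3 q c0p fc] by blast
    have Bf: "\<And>r. r \<ge> 0 \<Longrightarrow> P (laplacian (laplacian u)) r \<le> B" using B by simp
    obtain L where L: "(P (laplacian (laplacian u)) \<longlongrightarrow> L) at_top" "\<forall>r\<ge>0. P (laplacian (laplacian u)) r < L"
      using p.w_conv[OF Bf] by blast
    have Lpos: "L > 0"
    proof (rule ccontr)
      assume nL: "\<not> L > 0"
      have "P (laplacian (laplacian u)) r < 0" if r: "r > 0" for r
      proof -
        have "P (laplacian (laplacian u)) r < L" using L(2) r by simp
        then show ?thesis using nL by simp
      qed
      then have "\<And>r. r > 0 \<Longrightarrow> P (laplacian (laplacian u)) r < 0" by blast
      then have fub: "\<And>r. r \<ge> 0 \<Longrightarrow> P u r \<le> P u 0 + P (laplacian u) 0 / (2 * real CARD('n)) * r^2"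
        by (rule p.fub)
      show False by (rule contra_growth[OF c0p fc fub])
    qed
    have A1: "(laplacian (laplacian u) \<longlongrightarrow> L) at_infinity"
      by (subst ww) (rule comp[OF L(1)])
    have A2: "((\<lambda>x. u x / norm x ^ 4) \<longlongrightarrow> L / (8 * real CARD('n) * (real CARD('n) + 2))) at_infinity"
      unfolding uu by (rule comp[OF p.asym[OF L(1)]])
    show ?thesis using Lpos A1 A2 by blast
  qed
  show "L > 0 \<Longrightarrow> ((\<lambda>x. ereal (laplacian (laplacian u) x)) \<longlongrightarrow> L) at_infinity \<Longrightarrow>
      Liminf at_infinity (\<lambda>x. ereal (u x / norm x ^ 4)) > 0"
  proof -
    assume Lp: "L > 0" and lim: "((\<lambda>x. ereal (laplacian (laplacian u) x)) \<longlongrightarrow> L) at_infinity"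
    have lr: "((\<lambda>r. ereal (P (laplacian (laplacian u)) r)) \<longlongrightarrow> L) at_top"
      using filterlim_compose[OF lim ray_at_infinity[of k]] unfolding Pn by simp
    obtain a where a: "0 < ereal a" "ereal a < L" using ereal_dense2[OF Lp] by blast
    have "eventually (\<lambda>r. ereal a < ereal (P (laplacian (laplacian u)) r)) at_top"
      using order_tendstoD(1)[OF lr a(2)] .
    then obtain N where N: "\<And>r. r \<ge> N \<Longrightarrow> ereal a < ereal (P (laplacian (laplacian u)) r)"
      unfolding eventually_at_top_linorder by blast
    have ap: "a > 0" using a(1) by simp
    have Na: "\<And>r. r \<ge> N \<Longrightarrow> P (laplacian (laplacian u)) r \<ge> a"
      using N by (simp add: less_imp_le)
    obtain c R where c: "c > 0" and cR: "\<forall>r\<ge>R. P u r \<ge> c * r^4"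
      using p.lower[OF ap Na] by blast
    have "eventually (\<lambda>x. ereal c \<le> ereal (u x / norm x ^ 4)) at_infinity"
      unfolding eventually_at_infinity
    proof (intro exI allI impI)
      fix x :: "real^'n" assume x: "max R 1 \<le> norm x"
      have cu: "c * norm x ^ 4 \<le> u x" using cR x Fu[of x] by simp
      have "norm x > 0" using x by linarith
      then have np: "norm x ^ 4 > 0" by simp
      have "c \<le> u x / norm x ^ 4" using cu by (simp add: pos_le_divide_eq[OF np])
      then show "ereal c \<le> ereal (u x / norm x ^ 4)" by simp
    qed
    then have "ereal c \<le> Liminf at_infinity (\<lambda>x. ereal (u x / norm x ^ 4))" by (rule Liminf_bounded)
    then show ?thesis using c by (meson ereal_less(2) order_less_le_trans)
  qed
  show "(laplacian (laplacian u) \<longlongrightarrow> 0) at_infinity \<Longrightarrow>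
          (\<forall>x. laplacian (laplacian u) x < 0 \<and> laplacian u x > 0) \<and>
          (\<exists>C>0. \<exists>R. \<forall>x. norm x \<ge> R \<longrightarrow> u x \<le> C * (norm x)\<^sup>2)"
  proof -
    assume lim: "(laplacian (laplacian u) \<longlongrightarrow> 0) at_infinity"
    have lr: "(P (laplacian (laplacian u)) \<longlongrightarrow> 0) at_top"
      using filterlim_compose[OF lim ray_at_infinity[of k]] unfolding P_def by simp
    have wn: "\<And>r. r \<ge> 0 \<Longrightarrow> P (laplacian (laplacian u)) r < 0" by (rule p.wneg0[OF lr])
    have vp: "\<And>r. r \<ge> 0 \<Longrightarrow> P (laplacian u) r > 0" by (rule p.vpos0[OF lr])
    have wn': "\<And>r. r > 0 \<Longrightarrow> P (laplacian (laplacian u)) r < 0" using wn by simp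
    have fub: "\<And>r. r \<ge> 0 \<Longrightarrow> P u r \<le> P u 0 + P (laplacian u) 0 / (2 * real CARD('n)) * r^2"
      by (rule p.fub[OF wn'])
    have X: "\<forall>x. laplacian (laplacian u) x < 0 \<and> laplacian u x > 0"
    proof
      fix x :: "real^'n"
      show "laplacian (laplacian u) x < 0 \<and> laplacian u x > 0"
        unfolding Fv[of x] Fw[of x] using wn[of "norm x"] vp[of "norm x"] by simp
    qed
    define C where "C = \<bar>P u 0\<bar> + \<bar>P (laplacian u) 0 / (2 * real CARD('n))\<bar> + 1"
    have "\<forall>x. norm x \<ge> 1 \<longrightarrow> u x \<le> C * (norm x)\<^sup>2"
    proof (intro allI impI)
      fix x :: "real^'n" assume x: "norm x \<ge> 1"
      show "u x \<le> C * (norm x)\<^sup>2" unfolding C_def Fu[of x]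
        by (rule quad_bound[OF x fub]) simp
    qed
    moreover have "C > 0" unfolding C_def
      using abs_ge_zero[of "P u 0"] abs_ge_zero[of "P (laplacian u) 0 / (2 * real CARD('n))"] by linarith
    ultimately show ?thesis using X by blast
  qed
qed

theorem mainTheorem12:
  shows
  "(\<forall>(u::real^'n::finite \<Rightarrow> real) q.
      CARD('n) \<ge> 3 \<and> CARD('n) \<noteq> 4 \<and> CARD('n) \<noteq> 6 \<and> q > 1/2 \<and> radial_sol q u \<and>
      Liminf at_infinity (\<lambda>x. ereal (u x / norm x ^ 4)) > 0 \<longrightarrow>
      (\<exists>L>0. (laplacian (laplacian u) \<longlongrightarrow> L) at_infinity \<and>
             ((\<lambda>x. u x / norm x ^ 4) \<longlongrightarrow> L / (8 * real CARD('n) * (real CARD('n) + 2))) at_infinity))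
   \<and>
   (\<forall>(u::real^'n::finite \<Rightarrow> real) q.
      CARD('n) \<ge> 2 \<and> q > 0 \<and> radial_sol q u \<longrightarrow>
      ((\<forall>L::ereal. L > 0 \<and> ((\<lambda>x. ereal (laplacian (laplacian u) x)) \<longlongrightarrow> L) at_infinity \<longrightarrow>
          Liminf at_infinity (\<lambda>x. ereal (u x / norm x ^ 4)) > 0 \<and>
          (CARD('n) \<ge> 3 \<and> CARD('n) \<noteq> 4 \<and> CARD('n) \<noteq> 6 \<and> q > 1/2 \<longrightarrow>
            (\<exists>L>0. (laplacian (laplacian u) \<longlongrightarrow> L) at_infinity \<and>
              ((\<lambda>x. u x / norm x ^ 4) \<longlongrightarrow> L / (8 * real CARD('n) * (real CARD('n) + 2))) at_infinity)))
       \<and>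
       ((laplacian (laplacian u) \<longlongrightarrow> 0) at_infinity \<longrightarrow>
          (\<forall>x. laplacian (laplacian u) x < 0 \<and> laplacian u x > 0) \<and>
          (\<exists>C>0. \<exists>R. \<forall>x. norm x \<ge> R \<longrightarrow> u x \<le> C * (norm x)\<^sup>2))))"
proof (rule conjI)
  show "\<forall>(u::real^'n::finite \<Rightarrow> real) q.
      CARD('n) \<ge> 3 \<and> CARD('n) \<noteq> 4 \<and> CARD('n) \<noteq> 6 \<and> q > 1/2 \<and> radial_sol q u \<and>
      Liminf at_infinity (\<lambda>x. ereal (u x / norm x ^ 4)) > 0 \<longrightarrow>
      (\<exists>L>0. (laplacian (laplacian u) \<longlongrightarrow> L) at_infinity \<and>
             ((\<lambda>x. u x / norm x ^ 4) \<longlongrightarrow> L / (8 * real CARD('n) * (real CARD('n) + 2))) at_infinity)"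
  proof (intro allI impI)
    fix u :: "real^'n \<Rightarrow> real" and q :: real
    assume h: "CARD('n) \<ge> 3 \<and> CARD('n) \<noteq> 4 \<and> CARD('n) \<noteq> 6 \<and> q > 1/2 \<and> radial_sol q u \<and>
      Liminf at_infinity (\<lambda>x. ereal (u x / norm x ^ 4)) > 0"
    then have n2: "CARD('n) \<ge> 2" and sol: "radial_sol q u" by auto
    show "\<exists>L>0. (laplacian (laplacian u) \<longlongrightarrow> L) at_infinity \<and>
             ((\<lambda>x. u x / norm x ^ 4) \<longlongrightarrow> L / (8 * real CARD('n) * (real CARD('n) + 2))) at_infinity"
    proof (rule main_u(1)[OF sol n2])
      show "CARD('n) \<ge> 3" using h by simp
      show "q > 1/2" using h by simp
      show "Liminf at_infinity (\<lambda>x. ereal (u x / norm x ^ 4)) > 0" using h by simp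
    qed
  qed
next
  show "\<forall>(u::real^'n::finite \<Rightarrow> real) q.
      CARD('n) \<ge> 2 \<and> q > 0 \<and> radial_sol q u \<longrightarrow>
      ((\<forall>L::ereal. L > 0 \<and> ((\<lambda>x. ereal (laplacian (laplacian u) x)) \<longlongrightarrow> L) at_infinity \<longrightarrow>
          Liminf at_infinity (\<lambda>x. ereal (u x / norm x ^ 4)) > 0 \<and>
          (CARD('n) \<ge> 3 \<and> CARD('n) \<noteq> 4 \<and> CARD('n) \<noteq> 6 \<and> q > 1/2 \<longrightarrow>
            (\<exists>L>0. (laplacian (laplacian u) \<longlongrightarrow> L) at_infinity \<and>
              ((\<lambda>x. u x / norm x ^ 4) \<longlongrightarrow> L / (8 * real CARD('n) * (real CARD('n) + 2))) at_infinity)))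
       \<and>
       ((laplacian (laplacian u) \<longlongrightarrow> 0) at_infinity \<longrightarrow>
          (\<forall>x. laplacian (laplacian u) x < 0 \<and> laplacian u x > 0) \<and>
          (\<exists>C>0. \<exists>R. \<forall>x. norm x \<ge> R \<longrightarrow> u x \<le> C * (norm x)\<^sup>2)))"
  proof (intro allI impI)
    fix u :: "real^'n \<Rightarrow> real" and q :: real
    assume h: "CARD('n) \<ge> 2 \<and> q > 0 \<and> radial_sol q u"
    have sol: "radial_sol q u" and n2: "CARD('n) \<ge> 2" using h by auto
    show "((\<forall>L::ereal. L > 0 \<and> ((\<lambda>x. ereal (laplacian (laplacian u) x)) \<longlongrightarrow> L) at_infinity \<longrightarrow>
          Liminf at_infinity (\<lambda>x. ereal (u x / norm x ^ 4)) > 0 \<and>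
          (CARD('n) \<ge> 3 \<and> CARD('n) \<noteq> 4 \<and> CARD('n) \<noteq> 6 \<and> q > 1/2 \<longrightarrow>
            (\<exists>L>0. (laplacian (laplacian u) \<longlongrightarrow> L) at_infinity \<and>
              ((\<lambda>x. u x / norm x ^ 4) \<longlongrightarrow> L / (8 * real CARD('n) * (real CARD('n) + 2))) at_infinity)))
       \<and>
       ((laplacian (laplacian u) \<longlongrightarrow> 0) at_infinity \<longrightarrow>
          (\<forall>x. laplacian (laplacian u) x < 0 \<and> laplacian u x > 0) \<and>
          (\<exists>C>0. \<exists>R. \<forall>x. norm x \<ge> R \<longrightarrow> u x \<le> C * (norm x)\<^sup>2)))"
    proof (rule conjI)
      show "\<forall>L::ereal. L > 0 \<and> ((\<lambda>x. ereal (laplacian (laplacian u) x)) \<longlongrightarrow> L) at_infinity \<longrightarrow>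
          Liminf at_infinity (\<lambda>x. ereal (u x / norm x ^ 4)) > 0 \<and>
          (CARD('n) \<ge> 3 \<and> CARD('n) \<noteq> 4 \<and> CARD('n) \<noteq> 6 \<and> q > 1/2 \<longrightarrow>
            (\<exists>L>0. (laplacian (laplacian u) \<longlongrightarrow> L) at_infinity \<and>
              ((\<lambda>x. u x / norm x ^ 4) \<longlongrightarrow> L / (8 * real CARD('n) * (real CARD('n) + 2))) at_infinity))"
      proof (intro allI impI)
        fix L :: ereal
        assume hL: "L > 0 \<and> ((\<lambda>x. ereal (laplacian (laplacian u) x)) \<longlongrightarrow> L) at_infinity"
        have li: "Liminf at_infinity (\<lambda>x. ereal (u x / norm x ^ 4)) > 0"
          using main_u(2)[OF sol n2, of L] hL by simp
        show "Liminf at_infinity (\<lambda>x. ereal (u x / norm x ^ 4)) > 0 \<and>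
          (CARD('n) \<ge> 3 \<and> CARD('n) \<noteq> 4 \<and> CARD('n) \<noteq> 6 \<and> q > 1/2 \<longrightarrow>
            (\<exists>L>0. (laplacian (laplacian u) \<longlongrightarrow> L) at_infinity \<and>
              ((\<lambda>x. u x / norm x ^ 4) \<longlongrightarrow> L / (8 * real CARD('n) * (real CARD('n) + 2))) at_infinity))"
        proof (intro conjI impI)
          show "Liminf at_infinity (\<lambda>x. ereal (u x / norm x ^ 4)) > 0" by (rule li)
          assume c: "CARD('n) \<ge> 3 \<and> CARD('n) \<noteq> 4 \<and> CARD('n) \<noteq> 6 \<and> q > 1/2"
          show "\<exists>L>0. (laplacian (laplacian u) \<longlongrightarrow> L) at_infinity \<and>
              ((\<lambda>x. u x / norm x ^ 4) \<longlongrightarrow> L / (8 * real CARD('n) * (real CARD('n) + 2))) at_infinity"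
            by (rule main_u(1)[OF sol n2]) (use c li in simp_all)
        qed
      qed
    next
      show "(laplacian (laplacian u) \<longlongrightarrow> 0) at_infinity \<longrightarrow>
          (\<forall>x. laplacian (laplacian u) x < 0 \<and> laplacian u x > 0) \<and>
          (\<exists>C>0. \<exists>R. \<forall>x. norm x \<ge> R \<longrightarrow> u x \<le> C * (norm x)\<^sup>2)"
        by (rule impI) (rule main_u(3)[OF sol n2])
    qed
  qed
qed


end
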